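(* For the cycle $C_n$ with $n\ge 3$ vertices, $b_{OCD}(C_n)=1$ if $n=3$ and $b_{OCD}(C_n)=\lceil n/3\rceil$ if $n\ge 4$.
   Context: A set $S\subseteq V$ is a dominating set of a graph $G=(V,E)$ if every vertex not in $S$ is adjacent to a vertex of $S$. A set $\tilde D\subseteq V$ is an outer-connected dominating set of $G$ if $\tilde D$ is dominating and the induced subgraph $G[V\setminus\tilde D]$ is connected (the empty graph counts as connected). $\tilde\gamma_c(G)$ is the minimum size of an outer-connected dominating set. For a graph $G$ without isolated vertices, the outer-connected bondage number $b_{OCD}(G)$ is the minimum number of edges whose removal from $G$ yields a graph $G'$ with $\tilde\gamma_c(G')>\tilde\gamma_c(G)$. *)

theory Defs
  imports Complex_Main
begin

text \<open>Simple graphs are given by a vertex set V and an edge set E of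
  two-element subsets {u,v} of V.\<close>

definition dominating :: "'a set \<Rightarrow> 'a set set \<Rightarrow> 'a set \<Rightarrow> bool" where
  "dominating V E S \<longleftrightarrow> S \<subseteq> V \<and> (\<forall>v \<in> V - S. \<exists>u \<in> S. {u, v} \<in> E)"

text \<open>The induced subgraph on W is connected (vacuously true for W empty).\<close>
definition induced_connected :: "'a set set \<Rightarrow> 'a set \<Rightarrow> bool" where
  "induced_connected E W \<longleftrightarrow>
     (\<forall>u \<in> W. \<forall>v \<in> W. (u, v) \<in> {(x, y). x \<in> W \<and> y \<in> W \<and> {x, y} \<in> E}\<^sup>*)"

definition outer_connected_dominating :: "'a set \<Rightarrow> 'a set set \<Rightarrow> 'a set \<Rightarrow> bool" where
  "outer_connected_dominating V E D \<longleftrightarrow> dominating V E D \<and> induced_connected E (V - D)"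

definition ocd_number :: "'a set \<Rightarrow> 'a set set \<Rightarrow> nat" where
  "ocd_number V E = Min {card D | D. outer_connected_dominating V E D}"

definition ocd_bondage :: "'a set \<Rightarrow> 'a set set \<Rightarrow> nat" where
  "ocd_bondage V E = Min {card F | F. F \<subseteq> E \<and> ocd_number V (E - F) > ocd_number V E}"

definition cycle_vertices :: "nat \<Rightarrow> nat set" where
  "cycle_vertices n = {0..<n}"

definition cycle_edges :: "nat \<Rightarrow> nat set set" where
  "cycle_edges n = {{i, (i + 1) mod n} | i. i < n}"

end

theory Submission imports Defs Complex_Main begin

lemma suc_mod_inj: "x < n \<Longrightarrow> y < n \<Longrightarrow> Suc x mod n = Suc y mod n \<Longrightarrow> x = y"
  by (auto simp: mod_Suc split: if_splits)

lemma nb: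
  assumes "{i, x} \<in> cycle_edges n"
  shows "x < n \<and> i < n \<and> (x = Suc i mod n \<or> Suc x mod n = i)"
proof -
  obtain j where j: "j < n" "{i,x} = {j, Suc j mod n}" using assms unfolding cycle_edges_def by auto
  then show ?thesis by (auto simp: doubleton_eq_iff)
qed

lemma noloop:
  assumes "n \<ge> 2" shows "{w, w} \<notin> cycle_edges n"
proof
  assume "{w,w} \<in> cycle_edges n"
  then obtain j where j: "j < n" "{w} = {j, Suc j mod n}" unfolding cycle_edges_def by auto
  hence "Suc j mod n = j" by (metis insert_iff singletonD)
  with j(1) assms show False by (auto simp: mod_Suc split: if_splits)
qed

lemma three_nb:
  assumes "{w,a} \<in> cycle_edges n" "{w,b} \<in> cycle_edges n" "{w,c} \<in> cycle_edges n" "a \<noteq> b"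
  shows "c = a \<or> c = b"
  using nb[OF assms(1)] nb[OF assms(2)] nb[OF assms(3)] suc_mod_inj[of a n b] suc_mod_inj[of a n c] suc_mod_inj[of b n c] assms(4)
  by (elim conjE disjE; simp)


definition RR :: "nat set set \<Rightarrow> nat set \<Rightarrow> (nat \<times> nat) set" where
  "RR E W = {(x, y). x \<in> W \<and> y \<in> W \<and> {x, y} \<in> E}"

lemma reach:
  assumes sub: "E' \<subseteq> cycle_edges n" and dom: "dominating (cycle_vertices n) E' D"
    and u: "u \<in> cycle_vertices n - D" and v: "v \<in> cycle_vertices n - D" and uv: "{u,v} \<in> E'"
    and r: "(u, x) \<in> (RR E' (cycle_vertices n - D))\<^sup>*"
  shows "x \<in> {u, v}"
  using r
proof (induction rule: rtrancl_induct)
  case base then show ?case by simp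
next
  case (step x y)
  have st: "x \<in> cycle_vertices n - D" "y \<in> cycle_vertices n - D" "{x,y} \<in> E'"
    using step(2) unfolding RR_def by auto
  obtain a where a: "a \<in> D" "{a, x} \<in> E'" using dom st(1) unfolding dominating_def by blast
  have a': "{x, a} \<in> cycle_edges n" using a sub by (auto simp: insert_commute)
  show ?case
  proof (cases "x = u")
    case True
    have "y = a \<or> y = v"
      by (rule three_nb[OF a']) (use st sub uv True a v in auto)
    then show ?thesis using a st by auto
  next
    case False
    hence xv: "x = v" using step(3) by auto
    have vu: "{v,u} \<in> cycle_edges n" using uv sub by (auto simp: insert_commute)
    have "y = a \<or> y = u"
      by (rule three_nb[OF a']) (use st sub vu xv a u in auto)
    then show ?thesis using a st by auto
  qed
qed

lemma Wstruct:
  assumes n: "n \<ge> 3" and sub: "E' \<subseteq> cycle_edges n"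
    and ocd: "outer_connected_dominating (cycle_vertices n) E' D"
    and u: "u \<in> cycle_vertices n - D" and w: "w \<in> cycle_vertices n - D" and uw: "u \<noteq> w"
  shows "\<exists>v. v \<in> cycle_vertices n - D \<and> v \<noteq> u \<and> {u,v} \<in> E' \<and> cycle_vertices n - D = {u, v}"
proof -
  let ?W = "cycle_vertices n - D"
  have dom: "dominating (cycle_vertices n) E' D" and con: "induced_connected E' ?W"
    using ocd unfolding outer_connected_dominating_def by auto
  have "(u, w) \<in> (RR E' ?W)\<^sup>*" using con u w unfolding induced_connected_def RR_def by blast
  then obtain v where v: "(u, v) \<in> RR E' ?W"
    using uw by (metis converse_rtranclE)
  hence vW: "v \<in> ?W" and uv: "{u,v} \<in> E'" unfolding RR_def by auto
  have vu: "v \<noteq> u" using uv sub noloop[of n u] n by auto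
  have "?W \<subseteq> {u, v}"
  proof
    fix x assume "x \<in> ?W"
    hence "(u, x) \<in> (RR E' ?W)\<^sup>*" using con u unfolding induced_connected_def RR_def by blast
    then show "x \<in> {u,v}" using reach[OF sub dom u vW uv] by blast
  qed
  then show ?thesis using vW vu uv u by blast
qed


lemma mod3facts: "n \<ge> 3 \<Longrightarrow> k < n \<Longrightarrow> p = Suc k mod n \<Longrightarrow> q = Suc p mod n \<Longrightarrow> r = Suc q mod n \<Longrightarrow>
  k \<noteq> p \<and> k \<noteq> q \<and> r \<noteq> p \<and> r \<noteq> q \<and> p \<noteq> q \<and> p < n \<and> q < n \<and> r < n"
  by (auto simp: mod_Suc split: if_splits)

definition ed :: "nat \<Rightarrow> nat \<Rightarrow> nat set" where "ed n k = {k, Suc k mod n}"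

definition cons3 :: "nat \<Rightarrow> nat set set \<Rightarrow> bool" where
  "cons3 n E' \<longleftrightarrow> (\<exists>k<n. ed n k \<in> E' \<and> ed n (Suc k mod n) \<in> E' \<and> ed n (Suc (Suc k mod n) mod n) \<in> E')"

lemma cycle_edges_ed: "cycle_edges n = ed n ` {..<n}"
  unfolding cycle_edges_def ed_def by auto

lemma ocd_sub: "outer_connected_dominating V E' D \<Longrightarrow> D \<subseteq> V"
  unfolding outer_connected_dominating_def dominating_def by auto

lemma ocd_V: "outer_connected_dominating V E' V"
  unfolding outer_connected_dominating_def dominating_def induced_connected_def by auto

lemma ocd_fin: "finite V \<Longrightarrow> finite {card D |D. outer_connected_dominating V E' D}"
proof -
  assume "finite V"
  moreover have "{card D |D. outer_connected_dominating V E' D} \<subseteq> card ` Pow V"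
    using ocd_sub by blast
  ultimately show ?thesis by (meson finite_Pow_iff finite_imageI finite_subset)
qed

lemma consC:
  assumes sub: "E' \<subseteq> cycle_edges n" and e: "{a,u} \<in> E'" "{u,v} \<in> E'" "{v,b} \<in> E'"
    and v: "v = Suc u mod n" and av: "a \<noteq> v" and bu: "b \<noteq> u"
  shows "cons3 n E'"
proof -
  have 1: "{u,a} \<in> cycle_edges n" using e sub by (auto simp: insert_commute)
  have 2: "{v,b} \<in> cycle_edges n" using e sub by auto
  have au: "Suc a mod n = u" and an: "a < n" and un: "u < n" using nb[OF 1] av v by auto
  have "b = Suc v mod n" using nb[OF 2] suc_mod_inj[of b n u] un v bu by auto
  show ?thesis unfolding cons3_def ed_def
    using an au e v \<open>b = _\<close> by (auto simp: insert_commute)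
qed

lemma lower1:
  assumes n: "n \<ge> 3" and sub: "E' \<subseteq> cycle_edges n"
    and ocd: "outer_connected_dominating (cycle_vertices n) E' D"
  shows "card D \<ge> n - 2"
proof -
  let ?V = "cycle_vertices n" let ?W = "?V - D"
  have DV: "D \<subseteq> ?V" using ocd_sub[OF ocd] .
  have cV: "card ?V = n" "finite ?V" unfolding cycle_vertices_def by auto
  have "card ?W \<le> 2"
  proof (cases "\<exists>u w. u \<in> ?W \<and> w \<in> ?W \<and> u \<noteq> w")
    case True
    then obtain u w where "u \<in> ?W" "w \<in> ?W" "u \<noteq> w" by blast
    from Wstruct[OF n sub ocd this] obtain v where "?W = {u,v}" by blast
    then show ?thesis by (simp add: card_insert_le_m1)
  next
    case False
    hence "card ?W \<le> 1" using cV by (metis card_le_Suc0_iff_eq finite_Diff One_nat_def)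
    then show ?thesis by simp
  qed
  moreover have "card ?W = n - card D" using DV cV by (simp add: card_Diff_subset finite_subset)
  moreover have "card D \<le> n" using DV cV card_mono by metis
  ultimately show ?thesis by linarith
qed

lemma lower2:
  assumes n: "n \<ge> 3" and sub: "E' \<subseteq> cycle_edges n" and nc: "\<not> cons3 n E'"
    and ocd: "outer_connected_dominating (cycle_vertices n) E' D"
  shows "card D \<ge> n - 1"
proof -
  let ?V = "cycle_vertices n" let ?W = "?V - D"
  have DV: "D \<subseteq> ?V" using ocd_sub[OF ocd] .
  have dom: "dominating ?V E' D" using ocd unfolding outer_connected_dominating_def by auto
  have cV: "card ?V = n" "finite ?V" unfolding cycle_vertices_def by auto
  have "card ?W \<le> 1"
  proof (rule ccontr)
    assume "\<not> card ?W \<le> 1"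
    then obtain u w where uw: "u \<in> ?W" "w \<in> ?W" "u \<noteq> w" using cV
      by (metis card_le_Suc0_iff_eq finite_Diff One_nat_def)
    from Wstruct[OF n sub ocd this] obtain v where v: "v \<in> ?W" "v \<noteq> u" "{u,v} \<in> E'" by blast
    obtain a where a: "a \<in> D" "{a,u} \<in> E'" using dom uw unfolding dominating_def by blast
    obtain b where b: "b \<in> D" "{b,v} \<in> E'" using dom v unfolding dominating_def by blast
    have "{u,v} \<in> cycle_edges n" using v sub by auto
    from nb[OF this] have "v = Suc u mod n \<or> u = Suc v mod n" by auto
    then show False
    proof
      assume "v = Suc u mod n"
      moreover have "{v,b} \<in> E'" using b by (simp add: insert_commute)
      ultimately have "cons3 n E'" using consC[OF sub a(2) v(3)] a b v uw by auto
      with nc show False by simp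
    next
      assume "u = Suc v mod n"
      moreover have "{u,a} \<in> E'" "{v,u} \<in> E'" using a v by (auto simp: insert_commute)
      ultimately have "cons3 n E'" using consC[OF sub b(2)] a b v uw by auto
      with nc show False by simp
    qed
  qed
  moreover have "card ?W = n - card D" using DV cV by (simp add: card_Diff_subset finite_subset)
  moreover have "card D \<le> n" using DV cV card_mono by metis
  ultimately show ?thesis by linarith
qed

lemma upper:
  assumes n: "n \<ge> 3" and c: "cons3 n E'"
  shows "\<exists>D. outer_connected_dominating (cycle_vertices n) E' D \<and> card D = n - 2"
proof -
  obtain k where k: "k < n" "ed n k \<in> E'" "ed n (Suc k mod n) \<in> E'" "ed n (Suc (Suc k mod n) mod n) \<in> E'"
    using c unfolding cons3_def by blast
  define p where "p = Suc k mod n"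
  define q where "q = Suc p mod n"
  define r where "r = Suc q mod n"
  note f = mod3facts[OF n k(1) p_def q_def r_def]
  have e: "{k,p} \<in> E'" "{p,q} \<in> E'" "{q,r} \<in> E'" using k unfolding ed_def p_def q_def r_def by auto
  let ?D = "cycle_vertices n - {p,q}"
  have dom: "dominating (cycle_vertices n) E' ?D"
    unfolding dominating_def cycle_vertices_def using f e k(1)
    by (auto simp: insert_commute)
  have con: "induced_connected E' (cycle_vertices n - ?D)"
  proof -
    have W: "cycle_vertices n - ?D = {p,q}" using f unfolding cycle_vertices_def by auto
    have "(p,q) \<in> {(x, y). x \<in> {p,q} \<and> y \<in> {p,q} \<and> {x, y} \<in> E'}\<^sup>*" using e by auto
    moreover have "(q,p) \<in> {(x, y). x \<in> {p,q} \<and> y \<in> {p,q} \<and> {x, y} \<in> E'}\<^sup>*" using e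
      by (auto simp: insert_commute)
    ultimately show ?thesis unfolding induced_connected_def W by auto
  qed
  have "card ?D = n - 2" using f unfolding cycle_vertices_def by (simp add: card_Diff_subset)
  then show ?thesis using dom con unfolding outer_connected_dominating_def by blast
qed

lemma ocdn_ge2:
  assumes n: "n \<ge> 3" and sub: "E' \<subseteq> cycle_edges n"
  shows "ocd_number (cycle_vertices n) E' \<ge> n - 2"
  unfolding ocd_number_def
  using ocd_fin[of "cycle_vertices n" E'] ocd_V[of "cycle_vertices n" E'] lower1[OF n sub]
  by (subst Min_ge_iff) (auto simp: cycle_vertices_def)

lemma ocdn_ge1:
  assumes n: "n \<ge> 3" and sub: "E' \<subseteq> cycle_edges n" and nc: "\<not> cons3 n E'"
  shows "ocd_number (cycle_vertices n) E' \<ge> n - 1"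
  unfolding ocd_number_def
  using ocd_fin[of "cycle_vertices n" E'] ocd_V[of "cycle_vertices n" E'] lower2[OF n sub nc]
  by (subst Min_ge_iff) (auto simp: cycle_vertices_def)

lemma ocdn_le:
  assumes n: "n \<ge> 3" and c: "cons3 n E'"
  shows "ocd_number (cycle_vertices n) E' \<le> n - 2"
proof -
  obtain D where "outer_connected_dominating (cycle_vertices n) E' D" "card D = n - 2"
    using upper[OF n c] by blast
  then show ?thesis unfolding ocd_number_def
    using ocd_fin[of "cycle_vertices n" E']
    by (intro Min_le_iff[THEN iffD2]) (auto simp: cycle_vertices_def)
qed


lemma pred_eq: "k < n \<Longrightarrow> j < n \<Longrightarrow> Suc k mod n = j \<Longrightarrow> k = (j + n - 1) mod n"
proof -
  assume k: "k < n" and j: "j < n" and e: "Suc k mod n = j"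
  show ?thesis
  proof (cases "Suc k = n")
    case True
    then have "j = 0" using e by simp
    then show ?thesis using True k by simp
  next
    case False
    then have "j = Suc k" using e k by simp
    then have "j + n - 1 = k + n" by simp
    then show ?thesis using k by simp
  qed
qed

lemma hit3: "n\<ge>3 \<Longrightarrow> k < n \<Longrightarrow> 3 dvd k \<or> 3 dvd (Suc k mod n) \<or> 3 dvd (Suc (Suc k mod n) mod n)"
proof -
  assume n: "n \<ge> 3" and k: "k < n"
  show ?thesis
  proof (cases "Suc k = n")
    case True then show ?thesis by simp
  next
    case False
    hence s: "Suc k mod n = Suc k" using k by simp
    show ?thesis
    proof (cases "Suc (Suc k) = n")
      case True then show ?thesis using s by simp
    next
      case False
      hence "Suc (Suc k) mod n = Suc (Suc k)" using k \<open>Suc k \<noteq> n\<close> by simp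
      moreover have "3 dvd k \<or> 3 dvd Suc k \<or> 3 dvd Suc (Suc k)" by presburger
      ultimately show ?thesis using s by simp
    qed
  qed
qed

lemma J0_eq: "{i. i < (n::nat) \<and> 3 dvd i} = (\<lambda>t. 3*t) ` {..<(n+2) div 3}"
proof (intro set_eqI iffI)
  fix x assume "x \<in> {i. i < n \<and> 3 dvd i}"
  then obtain t where "x = 3*t" "3*t < n" by auto
  moreover hence "t < (n+2) div 3" by linarith
  ultimately show "x \<in> (\<lambda>t. 3*t) ` {..<(n+2) div 3}" by auto
next
  fix x assume "x \<in> (\<lambda>t. 3*t) ` {..<(n+2) div 3}"
  then obtain t where t: "x = 3*t" "t < (n+2) div 3" by auto
  hence "3*t < n" by linarith
  then show "x \<in> {i. i < n \<and> 3 dvd i}" using t by auto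
qed

lemma ceil_eq: "nat \<lceil>real n / 3\<rceil> = (n+2) div 3"
proof -
  have a: "3 * ((n+2) div 3) \<le> n+2" "n+2 < 3 * ((n+2) div 3) + 3" by auto
  have b: "real (3 * ((n+2) div 3)) \<le> real n + 2" "real n + 2 < real (3 * ((n+2) div 3)) + 3"
    using a by linarith+
  have "\<lceil>real n / 3\<rceil> = int ((n+2) div 3)"
    by (rule ceiling_unique) (use b in \<open>simp_all add: field_simps\<close>)
  then show ?thesis by simp
qed

lemma ed_inj: "n \<ge> 3 \<Longrightarrow> inj_on (ed n) {..<n}"
proof (rule inj_onI)
  fix i j assume n: "n \<ge> 3" and i: "i \<in> {..<n}" and j: "j \<in> {..<n}" and e: "ed n i = ed n j"
  show "i = j"
  proof (rule ccontr)
    assume ij: "i \<noteq> j"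
    hence "i = Suc j mod n" "Suc i mod n = j" using e unfolding ed_def by (auto simp: doubleton_eq_iff)
    with mod3facts[OF n _ refl refl refl, of j] j show False by auto
  qed
qed

lemma counting:
  assumes n: "n \<ge> 3" and J: "J \<subseteq> {..<n}"
    and hit: "\<forall>k<n. k \<in> J \<or> Suc k mod n \<in> J \<or> Suc (Suc k mod n) mod n \<in> J"
  shows "n \<le> 3 * card J"
proof -
  define g where "g k = (if k \<in> J then k else if Suc k mod n \<in> J then Suc k mod n else Suc (Suc k mod n) mod n)" for k
  have gJ: "g k \<in> J" if "k < n" for k using hit that unfolding g_def by auto
  have fJ: "finite J" using J finite_subset by blast
  have "{..<n} \<subseteq> (\<Union>j\<in>J. {k. k < n \<and> g k = j})" using gJ by auto
  hence "card {..<n} \<le> card (\<Union>j\<in>J. {k. k < n \<and> g k = j})"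
    by (intro card_mono) (auto simp: fJ)
  also have "\<dots> \<le> (\<Sum>j\<in>J. card {k. k < n \<and> g k = j})" by (rule card_UN_le[OF fJ])
  also have "\<dots> \<le> (\<Sum>j\<in>J. 3)"
  proof (rule sum_mono)
    fix j assume jJ: "j \<in> J"
    hence jn: "j < n" using J by auto
    let ?p = "\<lambda>x. (x + n - 1) mod n"
    have "{k. k < n \<and> g k = j} \<subseteq> {j, ?p j, ?p (?p j)}"
    proof
      fix k assume k: "k \<in> {k. k < n \<and> g k = j}"
      hence kn: "k < n" by auto
      have "k = j \<or> Suc k mod n = j \<or> Suc (Suc k mod n) mod n = j" using k unfolding g_def
        by (auto split: if_splits)
      moreover have "Suc k mod n < n" using n by auto
      ultimately show "k \<in> {j, ?p j, ?p (?p j)}"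
        using pred_eq[OF kn jn] pred_eq[OF \<open>Suc k mod n < n\<close> jn] pred_eq[OF kn, of "Suc k mod n"]
        by auto
    qed
    hence "card {k. k < n \<and> g k = j} \<le> card {j, ?p j, ?p (?p j)}" by (intro card_mono) auto
    also have "\<dots> \<le> 3" by (auto simp: card_insert_if)
    finally show "card {k. k < n \<and> g k = j} \<le> 3" .
  qed
  finally show ?thesis by simp
qed

lemma ocdE: "n \<ge> 3 \<Longrightarrow> ocd_number (cycle_vertices n) (cycle_edges n) = n - 2"
proof -
  assume n: "n \<ge> 3"
  have "cons3 n (cycle_edges n)" unfolding cons3_def cycle_edges_ed using n
    by (intro exI[of _ 0]) auto
  with ocdn_le[OF n] ocdn_ge2[OF n] show ?thesis by (meson order.antisym order_refl)
qed

lemma bond: "n \<ge> 3 \<Longrightarrow> ocd_bondage (cycle_vertices n) (cycle_edges n) = (n + 2) div 3"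
proof -
  assume n: "n \<ge> 3"
  let ?E = "cycle_edges n"
  let ?S = "{card F |F. F \<subseteq> ?E \<and> ocd_number (cycle_vertices n) (?E - F) > ocd_number (cycle_vertices n) ?E}"
  have finE: "finite ?E" unfolding cycle_edges_ed by auto
  have inc: "ocd_number (cycle_vertices n) (?E - F) > ocd_number (cycle_vertices n) ?E \<longleftrightarrow> \<not> cons3 n (?E - F)"
    for F
  proof
    assume "ocd_number (cycle_vertices n) (?E - F) > ocd_number (cycle_vertices n) ?E"
    then show "\<not> cons3 n (?E - F)" using ocdn_le[OF n, of "?E - F"] ocdE[OF n] by auto
  next
    assume "\<not> cons3 n (?E - F)"
    from ocdn_ge1[OF n _ this] n ocdE[OF n]
    show "ocd_number (cycle_vertices n) (?E - F) > ocd_number (cycle_vertices n) ?E" by auto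
  qed
  have fin: "finite ?S"
    by (rule finite_subset[of _ "card ` Pow ?E"]) (auto simp: finE)
  define J0 where "J0 = {i. i < n \<and> 3 dvd i}"
  have cJ0: "card J0 = (n+2) div 3" unfolding J0_def J0_eq
    by (subst card_image) (auto simp: inj_on_def)
  have J0n: "J0 \<subseteq> {..<n}" unfolding J0_def by auto
  have inS: "(n+2) div 3 \<in> ?S"
  proof -
    have sub: "ed n ` J0 \<subseteq> ?E" using J0n unfolding cycle_edges_ed by auto
    have "card (ed n ` J0) = (n+2) div 3"
      using cJ0 card_image inj_on_subset[OF ed_inj[OF n] J0n] by metis
    moreover have "\<not> cons3 n (?E - ed n ` J0)"
    proof
      assume "cons3 n (?E - ed n ` J0)"
      then obtain k where k: "k < n" "ed n k \<notin> ed n ` J0" "ed n (Suc k mod n) \<notin> ed n ` J0"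
        "ed n (Suc (Suc k mod n) mod n) \<notin> ed n ` J0" unfolding cons3_def by auto
      have "x \<in> J0" if "x < n" "3 dvd x" for x using that unfolding J0_def by simp
      moreover have "Suc k mod n < n" "Suc (Suc k mod n) mod n < n" using n by auto
      ultimately show False using hit3[OF n k(1)] k by blast
    qed
    ultimately have "\<not> cons3 n (?E - ed n ` J0) \<and> card (ed n ` J0) = (n+2) div 3" by simp
    with sub inc[of "ed n ` J0"] show ?thesis by (intro CollectI exI[of _ "ed n ` J0"]) auto
  qed
  have lb: "(n+2) div 3 \<le> m" if "m \<in> ?S" for m
  proof -
    obtain F where F: "m = card F" "F \<subseteq> ?E" "\<not> cons3 n (?E - F)" using \<open>m \<in> ?S\<close> inc by blast
    define J where "J = {i. i < n \<and> ed n i \<in> F}"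
    have Jn: "J \<subseteq> {..<n}" unfolding J_def by auto
    have hit: "\<forall>k<n. k \<in> J \<or> Suc k mod n \<in> J \<or> Suc (Suc k mod n) mod n \<in> J"
    proof (intro allI impI)
      fix k assume k: "k < n"
      note f = mod3facts[OF n k refl refl refl]
      show "k \<in> J \<or> Suc k mod n \<in> J \<or> Suc (Suc k mod n) mod n \<in> J"
      proof (rule ccontr)
        assume "\<not> ?thesis"
        hence "ed n k \<in> ?E - F" "ed n (Suc k mod n) \<in> ?E - F" "ed n (Suc (Suc k mod n) mod n) \<in> ?E - F"
          using f k unfolding J_def cycle_edges_ed by auto
        hence "cons3 n (?E - F)" using k unfolding cons3_def by blast
        with F show False by simp
      qed
    qed
    have "n \<le> 3 * card J" by (rule counting[OF n Jn hit])
    moreover have "card J \<le> card F"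
    proof -
      have cj: "card J = card (ed n ` J)" using card_image inj_on_subset[OF ed_inj[OF n] Jn] by metis
      have "finite F" using F(2) finE by (rule finite_subset)
      moreover have "ed n ` J \<subseteq> F" unfolding J_def by auto
      ultimately have "card (ed n ` J) \<le> card F" by (rule card_mono)
      then show ?thesis using cj by simp
    qed
    ultimately show ?thesis using F by linarith
  qed
  show ?thesis unfolding ocd_bondage_def
    by (rule Min_eqI[OF fin lb inS])
qed

theorem theorem7p1:
  fixes n :: nat
  assumes "n \<ge> 3"
  shows "ocd_bondage (cycle_vertices n) (cycle_edges n) =
           (if n = 3 then 1 else nat \<lceil>real n / 3\<rceil>)"
  using bond[OF assms] ceil_eq[of n] by simp

end
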